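(* Let $d\ge3$, $h\ge1$. For each non-leaf vertex $i$ of $\mathcal{T}(d,h)$ choose a child $m_i$ of $i$ and put $J_i:=C_i\setminus\{m_i\}$, where $C_i$ is the set of children of $i$. Define $F(d,h):=\{0\}\cup\bigcup_{q=0}^{(h-2)/2}\bigcup_{i\in S_{2q+1}}J_i$ if $h$ is even, and $F(d,h):=\bigcup_{q=0}^{(h-1)/2}\bigcup_{i\in S_{2q}}J_i$ if $h$ is odd, where $S_k$ is the set of vertices at distance $k$ from the root $0$. Then $G(d,h)$ is generated by $\{\bar{\mathbf{x}}_i : i\in F(d,h)\}$.
   Context: Let $\mathcal{T}(d,h)$ be the rooted tree in which the root $0$ has $d$ children, every vertex at distance $1,\dots,h-1$ from the root has $d-1$ children, and the vertices at distance $h$ are leaves. Let $V$ be its vertex set, $A$ its adjacency matrix, $\Delta := dI-A$, and $\Lambda\subset\mathbb{Z}^V$ the lattice spanned by the rows of $\Delta$. Then $G(d,h):=\mathbb{Z}^V/\Lambda$; $\{\mathbf{x}_i:i\in V\}$ is the standard basis of $\mathbb{Z}^V$ and $\bar{\mathbf{v}}$ denotes the image of $\mathbf{v}$ in $G(d,h)$. *)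

theory Defs
  imports Main
begin

text \<open>Vertices of T(d,h) are encoded as lists of child indices (the path from the root).
  The root 0 is the empty list; the root has children [0],...,[d-1]; a vertex at depth
  1..h-1 has children v@[0],...,v@[d-2]; vertices of length h are leaves.\<close>

definition tree_V :: "nat \<Rightarrow> nat \<Rightarrow> nat list set" where
  "tree_V d h = {xs. length xs \<le> h \<and> (\<forall>k<length xs. xs ! k < (if k = 0 then d else d - 1))}"

definition tree_adj :: "nat \<Rightarrow> nat \<Rightarrow> nat list \<Rightarrow> nat list \<Rightarrow> int" where
  "tree_adj d h u v = (if u \<in> tree_V d h \<and> v \<in> tree_V d h \<and>
       ((\<exists>c. v = u @ [c]) \<or> (\<exists>c. u = v @ [c])) then 1 else 0)"

definition tree_Delta :: "nat \<Rightarrow> nat \<Rightarrow> nat list \<Rightarrow> nat list \<Rightarrow> int" where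
  "tree_Delta d h u v = (if u = v then int d else 0) - tree_adj d h u v"

definition basis_vec :: "nat list \<Rightarrow> nat list \<Rightarrow> int" where
  "basis_vec i = (\<lambda>j. if j = i then 1 else 0)"

definition ZV :: "nat \<Rightarrow> nat \<Rightarrow> (nat list \<Rightarrow> int) set" where
  "ZV d h = {v. \<forall>j. j \<notin> tree_V d h \<longrightarrow> v j = 0}"

definition lattice_Lambda :: "nat \<Rightarrow> nat \<Rightarrow> (nat list \<Rightarrow> int) set" where
  "lattice_Lambda d h = {w. \<exists>a. w = (\<lambda>j. \<Sum>i\<in>tree_V d h. a i * tree_Delta d h i j)}"

definition children :: "nat \<Rightarrow> nat \<Rightarrow> nat list \<Rightarrow> nat list set" where
  "children d h i = {v \<in> tree_V d h. \<exists>c. v = i @ [c]}"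

definition sphere :: "nat \<Rightarrow> nat \<Rightarrow> nat \<Rightarrow> nat list set" where
  "sphere d h k = {v \<in> tree_V d h. length v = k}"

definition Jset :: "nat \<Rightarrow> nat \<Rightarrow> (nat list \<Rightarrow> nat list) \<Rightarrow> nat list \<Rightarrow> nat list set" where
  "Jset d h m i = children d h i - {m i}"

definition Fset :: "nat \<Rightarrow> nat \<Rightarrow> (nat list \<Rightarrow> nat list) \<Rightarrow> nat list set" where
  "Fset d h m = (if even h
     then {[]} \<union> (\<Union>q\<in>{0..(h - 2) div 2}. \<Union>i\<in>sphere d h (2*q+1). Jset d h m i)
     else (\<Union>q\<in>{0..(h - 1) div 2}. \<Union>i\<in>sphere d h (2*q). Jset d h m i))"

text \<open>G(d,h) = Z^V / Lambda is generated by the classes of the x_i, i in S, iff every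
  element of Z^V is an integer combination of the x_i (i in S) modulo Lambda.\<close>
definition generates_G :: "nat \<Rightarrow> nat \<Rightarrow> nat list set \<Rightarrow> bool" where
  "generates_G d h S \<longleftrightarrow> (\<forall>v\<in>ZV d h. \<exists>c. \<exists>w\<in>lattice_Lambda d h.
      v = (\<lambda>j. (\<Sum>i\<in>S. c i * basis_vec i j) + w j))"

end

theory Submission
  imports Defs "HOL-Library.Function_Algebras"
begin

lemma sum_fun_app: "(\<Sum>x\<in>A. (f x :: 'b \<Rightarrow> int)) j = (\<Sum>x\<in>A. f x j)"
  by (induction A rule: infinite_finite_induct) auto

lemma finite_tree_V: "finite (tree_V d h)"
proof -
  have "tree_V d h \<subseteq> {xs. set xs \<subseteq> {..<d} \<and> length xs \<le> h}"
  proof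
    fix xs assume "xs \<in> tree_V d h"
    then have "length xs \<le> h" "\<forall>k<length xs. xs ! k < (if k = 0 then d else d - 1)"
      by (auto simp: tree_V_def)
    then have "\<forall>k<length xs. xs ! k < d"
    proof (intro allI impI)
      fix k assume "k < length xs"
      then have "xs ! k < (if k = 0 then d else d - 1)" using \<open>\<forall>k<length xs. _\<close> by blast
      moreover have "(if k = 0 then d else d - 1) \<le> d" by simp
      ultimately show "xs ! k < d" by linarith
    qed
    then show "xs \<in> {xs. set xs \<subseteq> {..<d} \<and> length xs \<le> h}"
      using \<open>length xs \<le> h\<close> by (auto simp: in_set_conv_nth)
  qed
  then show ?thesis using finite_lists_length_le[of "{..<d}" h] finite_subset by blast
qed

definition Mset :: "nat \<Rightarrow> nat \<Rightarrow> nat list set \<Rightarrow> (nat list \<Rightarrow> int) set" where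
  "Mset d h S = {v. \<exists>c. \<exists>w\<in>lattice_Lambda d h. v = (\<lambda>j. (\<Sum>i\<in>S. c i * basis_vec i j) + w j)}"

lemma Lam_add: "w1 \<in> lattice_Lambda d h \<Longrightarrow> w2 \<in> lattice_Lambda d h \<Longrightarrow> w1 + w2 \<in> lattice_Lambda d h"
proof -
  assume "w1 \<in> lattice_Lambda d h" "w2 \<in> lattice_Lambda d h"
  then obtain a1 a2 where "w1 = (\<lambda>j. \<Sum>i\<in>tree_V d h. a1 i * tree_Delta d h i j)"
     "w2 = (\<lambda>j. \<Sum>i\<in>tree_V d h. a2 i * tree_Delta d h i j)" by (auto simp: lattice_Lambda_def)
  then have "w1 + w2 = (\<lambda>j. \<Sum>i\<in>tree_V d h. (a1 i + a2 i) * tree_Delta d h i j)"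
    by (auto simp: fun_eq_iff distrib_right sum.distrib)
  then show ?thesis by (auto simp: lattice_Lambda_def)
qed

lemma Lam_smul: "w \<in> lattice_Lambda d h \<Longrightarrow> (\<lambda>j. k * w j) \<in> lattice_Lambda d h"
proof -
  assume "w \<in> lattice_Lambda d h"
  then obtain a where "w = (\<lambda>j. \<Sum>i\<in>tree_V d h. a i * tree_Delta d h i j)"
    by (auto simp: lattice_Lambda_def)
  then have "(\<lambda>j. k * w j) = (\<lambda>j. \<Sum>i\<in>tree_V d h. (k * a i) * tree_Delta d h i j)"
    by (auto simp: fun_eq_iff sum_distrib_left mult.assoc)
  then show ?thesis by (auto simp: lattice_Lambda_def)
qed

lemma M_add: "v1 \<in> Mset d h S \<Longrightarrow> v2 \<in> Mset d h S \<Longrightarrow> v1 + v2 \<in> Mset d h S"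
proof -
  assume "v1 \<in> Mset d h S" "v2 \<in> Mset d h S"
  then obtain c1 c2 w1 w2 where w: "w1 \<in> lattice_Lambda d h" "w2 \<in> lattice_Lambda d h"
    and "v1 = (\<lambda>j. (\<Sum>i\<in>S. c1 i * basis_vec i j) + w1 j)"
    "v2 = (\<lambda>j. (\<Sum>i\<in>S. c2 i * basis_vec i j) + w2 j)" by (auto simp: Mset_def)
  then have "v1 + v2 = (\<lambda>j. (\<Sum>i\<in>S. (c1 i + c2 i) * basis_vec i j) + (w1 + w2) j)"
    by (auto simp: fun_eq_iff distrib_right sum.distrib)
  then show ?thesis using Lam_add[OF w] unfolding Mset_def
    by (intro CollectI exI[of _ "\<lambda>i. c1 i + c2 i"] bexI[of _ "w1 + w2"]) auto
qed

lemma M_smul: "v \<in> Mset d h S \<Longrightarrow> (\<lambda>j. k * v j) \<in> Mset d h S"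
proof -
  assume "v \<in> Mset d h S"
  then obtain c w where w: "w \<in> lattice_Lambda d h"
    and "v = (\<lambda>j. (\<Sum>i\<in>S. c i * basis_vec i j) + w j)" by (auto simp: Mset_def)
  then have "(\<lambda>j. k * v j) = (\<lambda>j. (\<Sum>i\<in>S. (k * c i) * basis_vec i j) + (\<lambda>j. k * w j) j)"
    by (auto simp: fun_eq_iff distrib_left sum_distrib_left mult.assoc)
  then show ?thesis using Lam_smul[where k=k, OF w] unfolding Mset_def
    by (intro CollectI exI[of _ "\<lambda>i. k * c i"] bexI[of _ "\<lambda>j. k * w j"]) auto
qed

lemma M_uminus: "v \<in> Mset d h S \<Longrightarrow> - v \<in> Mset d h S"
proof -
  assume "v \<in> Mset d h S"
  moreover have "- v = (\<lambda>j. (-1) * v j)" by (simp add: fun_eq_iff)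
  ultimately show ?thesis using M_smul[of v d h S "-1"] by simp
qed

lemma M_diff: "v1 \<in> Mset d h S \<Longrightarrow> v2 \<in> Mset d h S \<Longrightarrow> v1 - v2 \<in> Mset d h S"
  using M_add[of v1 d h S "- v2"] M_uminus[of v2 d h S] by simp

lemma M_zero: "0 \<in> Mset d h S"
proof -
  have "(0::nat list \<Rightarrow> int) \<in> lattice_Lambda d h"
    unfolding lattice_Lambda_def by (rule CollectI, rule exI[of _ "\<lambda>_. 0"]) (simp add: fun_eq_iff)
  then show ?thesis unfolding Mset_def
    by (intro CollectI exI[of _ "\<lambda>_. 0"] bexI[of _ 0]) (auto simp: fun_eq_iff)
qed

lemma M_sum: "finite A \<Longrightarrow> (\<And>x. x \<in> A \<Longrightarrow> f x \<in> Mset d h S) \<Longrightarrow> (\<Sum>x\<in>A. f x) \<in> Mset d h S"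
  by (induction A rule: finite_induct) (auto intro: M_add M_zero)

lemma bv_mult: "basis_vec u i * (x::int) = (if i = u then x else 0)"
  by (simp add: basis_vec_def)

lemma M_basis: "finite S \<Longrightarrow> u \<in> S \<Longrightarrow> basis_vec u \<in> Mset d h S"
proof -
  assume "finite S" "u \<in> S"
  have "(\<lambda>j. (\<Sum>i\<in>S. basis_vec u i * basis_vec i j) + (0::nat list \<Rightarrow> int) j) = basis_vec u"
    using \<open>finite S\<close> \<open>u \<in> S\<close> by (auto simp: fun_eq_iff bv_mult)
  moreover have "(0::nat list \<Rightarrow> int) \<in> lattice_Lambda d h"
    unfolding lattice_Lambda_def by (rule CollectI, rule exI[of _ "\<lambda>_. 0"]) (simp add: fun_eq_iff)
  ultimately show ?thesis unfolding Mset_def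
    by (intro CollectI exI[of _ "basis_vec u"] bexI[of _ 0]) auto
qed

lemma M_row: "u \<in> tree_V d h \<Longrightarrow> tree_Delta d h u \<in> Mset d h S"
proof -
  assume u: "u \<in> tree_V d h"
  have "tree_Delta d h u = (\<lambda>j. \<Sum>i\<in>tree_V d h. basis_vec u i * tree_Delta d h i j)"
    using u finite_tree_V[of d h] by (auto simp: fun_eq_iff bv_mult)
  then have "tree_Delta d h u \<in> lattice_Lambda d h" unfolding lattice_Lambda_def by blast
  then show ?thesis unfolding Mset_def
    by (intro CollectI exI[of _ "\<lambda>_. 0"] bexI[of _ "tree_Delta d h u"]) (auto simp: fun_eq_iff)
qed


lemma V_iff: "xs \<in> tree_V d h \<longleftrightarrow> length xs \<le> h \<and> (\<forall>k<length xs. xs ! k < (if k = 0 then d else d - 1))"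
  by (simp add: tree_V_def)

lemma prop_aux: "(L \<longleftrightarrow> R \<and> C) \<Longrightarrow> (X \<longleftrightarrow> S \<and> L) \<Longrightarrow> (Y \<longleftrightarrow> T \<and> R) \<Longrightarrow> (S \<longleftrightarrow> U \<and> T)
   \<Longrightarrow> (X \<longleftrightarrow> Y \<and> U \<and> C)"
  by blast

lemma V_snoc: "i @ [c] \<in> tree_V d h \<longleftrightarrow> i \<in> tree_V d h \<and> length i < h \<and> c < (if i = [] then d else d - 1)"
proof -
  have "(\<forall>k<length (i@[c]). (i@[c]) ! k < (if k = 0 then d else d - 1)) \<longleftrightarrow>
        (\<forall>k<length i. i ! k < (if k = 0 then d else d - 1)) \<and> c < (if i = [] then d else d - 1)"
    (is "?L \<longleftrightarrow> ?R")
  proof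
    assume L: ?L
    have "\<forall>k<length i. i ! k < (if k = 0 then d else d - 1)"
    proof (intro allI impI)
      fix k assume "k < length i"
      then show "i ! k < (if k = 0 then d else d - 1)"
        using L[rule_format, of k] by (simp add: nth_append)
    qed
    moreover have "c < (if i = [] then d else d - 1)"
      using L[rule_format, of "length i"] by simp
    ultimately show ?R by blast
  next
    assume R: ?R
    show ?L
    proof (intro allI impI)
      fix k assume k: "k < length (i @ [c])"
      show "(i @ [c]) ! k < (if k = 0 then d else d - 1)"
      proof (cases "k < length i")
        case True
        then show ?thesis using R by (simp add: nth_append)
      next
        case False
        then have "k = length i" using k by simp
        then show ?thesis using R by simp
      qed
    qed
  qed
  moreover have "i @ [c] \<in> tree_V d h \<longleftrightarrow> Suc (length i) \<le> h \<and> (\<forall>k<length (i@[c]). (i@[c]) ! k < (if k = 0 then d else d - 1))"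
    unfolding V_iff by simp
  moreover have "i \<in> tree_V d h \<longleftrightarrow> length i \<le> h \<and> (\<forall>k<length i. i ! k < (if k = 0 then d else d - 1))"
    unfolding V_iff by simp
  moreover have "Suc (length i) \<le> h \<longleftrightarrow> length i < h \<and> length i \<le> h" by auto
  ultimately show ?thesis by (rule prop_aux)
qed

lemma V_butlast: "u \<in> tree_V d h \<Longrightarrow> butlast u \<in> tree_V d h"
  by (cases u rule: rev_cases) (auto simp: V_snoc)

lemma children_iff: "v \<in> children d h i \<longleftrightarrow> v \<in> tree_V d h \<and> v \<noteq> [] \<and> butlast v = i"
  unfolding children_def by (cases v rule: rev_cases) auto

lemma child_len: "v \<in> children d h i \<Longrightarrow> length v = Suc (length i)"
  unfolding children_def by auto

lemma children_sub: "children d h i \<subseteq> tree_V d h"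
  unfolding children_def by auto

lemma finite_children: "finite (children d h i)"
  using finite_subset[OF children_sub finite_tree_V] .

lemma exists_J:
  assumes "d \<ge> 3" "i \<in> tree_V d h" "length i < h"
  shows "\<exists>c\<in>children d h i. c \<noteq> m"
proof -
  have "i @ [0] \<in> tree_V d h" "i @ [1] \<in> tree_V d h" using assms by (auto simp: V_snoc)
  then have c0: "i @ [0] \<in> children d h i" and c1: "i @ [1] \<in> children d h i"
    unfolding children_def by blast+
  show ?thesis
  proof (cases "i @ [0] = m")
    case True
    then have "i @ [1] \<noteq> m" by auto
    then show ?thesis using c1 by (rule_tac bexI)
  next
    case False
    then show ?thesis using c0 by (rule_tac bexI)
  qed
qed

lemma sum_basis_app: "finite A \<Longrightarrow> (\<Sum>c\<in>A. basis_vec c j) = (if j \<in> A then 1 else 0)"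
proof -
  assume "finite A"
  have "(\<Sum>c\<in>A. basis_vec c j) = (\<Sum>c\<in>A. if c = j then 1 else 0)"
    by (rule sum.cong) (auto simp: basis_vec_def)
  also have "\<dots> = (if j \<in> A then 1 else 0)" using \<open>finite A\<close> by (simp add: sum.delta')
  finally show ?thesis .
qed

lemma row_eq:
  assumes u: "u \<in> tree_V d h"
  shows "tree_Delta d h u = (\<lambda>j. int d * basis_vec u j) - (if u \<noteq> [] then basis_vec (butlast u) else 0)
           - (\<Sum>c\<in>children d h u. basis_vec c)"
proof (rule ext)
  fix j
  have adj: "tree_adj d h u j = (if j \<in> children d h u then 1 else 0) + (if u \<noteq> [] \<and> j = butlast u then 1 else 0)"
  proof (cases "u \<noteq> [] \<and> j = butlast u")
    case True
    have jn: "j \<notin> children d h u" using True child_len[of j d h u] by auto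
    have ex: "\<exists>c. u = j @ [c]" using True append_butlast_last_id[of u] by (intro exI[of _ "last u"]) simp
    have jV: "j \<in> tree_V d h" using True V_butlast[OF u] by simp
    have "tree_adj d h u j = 1" unfolding tree_adj_def using u jV ex by simp
    then show ?thesis using jn True by simp
  next
    case False
    have c1: "(\<exists>c. j = u @ [c]) \<and> j \<in> tree_V d h \<longleftrightarrow> j \<in> children d h u" by (auto simp: children_def)
    have c2: "\<not> (\<exists>c. u = j @ [c])" using False by auto
    have "(u \<in> tree_V d h \<and> j \<in> tree_V d h \<and> ((\<exists>c. j = u @ [c]) \<or> (\<exists>c. u = j @ [c]))) \<longleftrightarrow> j \<in> children d h u"
      using c1 c2 u by blast
    then have "tree_adj d h u j = (if j \<in> children d h u then 1 else 0)" unfolding tree_adj_def by presburger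
    then show ?thesis using False by simp
  qed
  have ne: "j \<in> children d h u \<Longrightarrow> j \<noteq> u" using child_len[of j d h u] by auto
  have S: "(\<Sum>c\<in>children d h u. basis_vec c) j = (if j \<in> children d h u then 1 else 0)"
    by (simp add: sum_fun_app sum_basis_app[OF finite_children])
  have R: "((\<lambda>j. int d * basis_vec u j) - (if u \<noteq> [] then basis_vec (butlast u) else 0)
           - (\<Sum>c\<in>children d h u. basis_vec c)) j = int d * basis_vec u j
           - (if u \<noteq> [] \<and> j = butlast u then 1 else 0) - (if j \<in> children d h u then 1 else 0)"
    unfolding minus_apply S by (simp add: basis_vec_def)
  have ne2: "u \<noteq> [] \<Longrightarrow> u \<noteq> butlast u" by (cases u rule: rev_cases) auto
  show "tree_Delta d h u j = ((\<lambda>j. int d * basis_vec u j) - (if u \<noteq> [] then basis_vec (butlast u) else 0)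
           - (\<Sum>c\<in>children d h u. basis_vec c)) j"
  proof (cases "j = u")
    case True
    then have "j \<notin> children d h u" "\<not> (u \<noteq> [] \<and> j = butlast u)" using ne ne2 by auto
    then show ?thesis unfolding R tree_Delta_def adj using True by (simp add: basis_vec_def)
  next
    case False
    then show ?thesis unfolding R tree_Delta_def adj by (simp add: basis_vec_def)
  qed
qed


lemma F_mem:
  assumes "w \<in> children d h v" "w \<noteq> m v" "v \<in> tree_V d h" "length v < h" "odd (h - length v)"
  shows "w \<in> Fset d h m"
proof -
  have wJ: "w \<in> Jset d h m v" using assms(1,2) by (simp add: Jset_def)
  define q where "q = length v div 2"
  show ?thesis
  proof (cases "even h")
    case True
    then have o: "odd (length v)" using assms(4,5) by presburger
    then have lv: "length v = 2*q+1" unfolding q_def by presburger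
    have qb: "q \<in> {0..(h - 2) div 2}" using lv assms(4) True by auto
    have "v \<in> sphere d h (2*q+1)" using assms(3) lv by (simp add: sphere_def)
    then have "w \<in> (\<Union>q\<in>{0..(h - 2) div 2}. \<Union>i\<in>sphere d h (2*q+1). Jset d h m i)"
      using qb wJ by blast
    then show ?thesis using True by (simp add: Fset_def)
  next
    case False
    then have o: "even (length v)" using assms(4,5) by presburger
    then have lv: "length v = 2*q" unfolding q_def by presburger
    have qb: "q \<in> {0..(h - 1) div 2}" using lv assms(4) by auto
    have "v \<in> sphere d h (2*q)" using assms(3) lv by (simp add: sphere_def)
    then have "w \<in> (\<Union>q\<in>{0..(h - 1) div 2}. \<Union>i\<in>sphere d h (2*q). Jset d h m i)"
      using qb wJ by blast
    then show ?thesis using False by (simp add: Fset_def)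
  qed
qed

lemma root_F: "even h \<Longrightarrow> [] \<in> Fset d h m"
  by (simp add: Fset_def)

lemma F_sub: "Fset d h m \<subseteq> tree_V d h"
proof -
  have "Jset d h m i \<subseteq> tree_V d h" for i using children_sub[of d h i] by (auto simp: Jset_def)
  moreover have "[] \<in> tree_V d h" by (simp add: tree_V_def)
  ultimately show ?thesis unfolding Fset_def by auto
qed


lemma fin_F: "finite (Fset d h m)"
  using finite_subset[OF F_sub finite_tree_V] .

lemma partA:
  assumes d3: "d \<ge> 3"
    and mc: "\<And>i. i \<in> tree_V d h \<Longrightarrow> length i < h \<Longrightarrow> m i \<in> children d h i"
  shows "v \<in> tree_V d h \<Longrightarrow> length v < h \<Longrightarrow> odd (h - length v) \<Longrightarrow> basis_vec v \<in> Mset d h (Fset d h m)"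
proof (induction "h - length v" arbitrary: v rule: less_induct)
  case less
  let ?M = "Mset d h (Fset d h m)"
  obtain c where c: "c \<in> children d h v" "c \<noteq> m v" using exists_J[OF d3 less.prems(1,2)] by blast
  have cF: "c \<in> Fset d h m" using F_mem[where m=m, OF c less.prems] .
  have ec: "basis_vec c \<in> ?M" using M_basis[OF fin_F cF] .
  have cV: "c \<in> tree_V d h" "c \<noteq> []" "butlast c = v" using c(1) by (auto simp: children_iff)
  have lc: "length c = Suc (length v)" using child_len[OF c(1)] .
  have eg: "basis_vec g \<in> ?M" if g: "g \<in> children d h c" for g
  proof -
    have gV: "g \<in> tree_V d h" using g children_sub by blast
    have lg: "length g = Suc (Suc (length v))" using child_len[OF g] lc by simp
    have "length g \<le> h" using gV by (simp add: tree_V_def)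
    then have lt: "length g < h" "odd (h - length g)" "h - length g < h - length v"
      using lg less.prems(3) by presburger+
    show ?thesis using less.hyps[OF lt(3) gV lt(1,2)] .
  qed
  have sg: "(\<Sum>g\<in>children d h c. basis_vec g) \<in> ?M"
    by (rule M_sum[OF finite_children]) (rule eg)
  have row: "tree_Delta d h c \<in> ?M" using M_row[OF cV(1)] .
  have eq: "tree_Delta d h c = (\<lambda>j. int d * basis_vec c j) - basis_vec v - (\<Sum>g\<in>children d h c. basis_vec g)"
    using row_eq[OF cV(1)] cV(2,3) by simp
  have "basis_vec v = (\<lambda>j. int d * basis_vec c j) - (\<Sum>g\<in>children d h c. basis_vec g) - tree_Delta d h c"
    unfolding eq by (simp add: algebra_simps)
  also have "\<dots> \<in> ?M" by (intro M_diff M_smul ec sg row)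
  finally show ?case .
qed


lemma partB:
  assumes d3: "d \<ge> 3"
    and mc: "\<And>i. i \<in> tree_V d h \<Longrightarrow> length i < h \<Longrightarrow> m i \<in> children d h i"
  shows "w \<in> tree_V d h \<Longrightarrow> even (h - length w) \<Longrightarrow> basis_vec w \<in> Mset d h (Fset d h m)"
proof (induction "length w" arbitrary: w rule: less_induct)
  case less
  let ?M = "Mset d h (Fset d h m)"
  show ?case
  proof (cases "w = []")
    case True
    then have "even h" using less.prems(2) by simp
    then show ?thesis using True M_basis[OF fin_F root_F] by simp
  next
    case False
    define v where "v = butlast w"
    have wc: "w \<in> children d h v" using less.prems(1) False by (simp add: children_iff v_def)
    have lw: "length w = Suc (length v)" using child_len[OF wc] .
    have vV: "v \<in> tree_V d h" using V_butlast[OF less.prems(1)] by (simp add: v_def)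
    have "length w \<le> h" using less.prems(1) by (simp add: tree_V_def)
    then have lv: "length v < h" "odd (h - length v)" using lw less.prems(2) by presburger+
    have ev: "basis_vec v \<in> ?M" using partA[OF d3 mc vV lv] .
    show ?thesis
    proof (cases "w = m v")
      case False
      then show ?thesis using M_basis[OF fin_F F_mem[where m=m, OF wc False vV lv]] by simp
    next
      case True
      define P where "P = (if v \<noteq> [] then basis_vec (butlast v) else (0::nat list \<Rightarrow> int))"
      have PM: "P \<in> ?M"
      proof (cases "v = []")
        case True
        then show ?thesis by (simp add: P_def M_zero)
      next
        case False
        have pV: "butlast v \<in> tree_V d h" using V_butlast[OF vV] .
        have lp: "length (butlast v) < length w" "even (h - length (butlast v))"
          using False lw lv by (cases v rule: rev_cases; simp; presburger)+
        show ?thesis using less.hyps[OF lp(1) pV lp(2)] False by (simp add: P_def)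
      qed
      have fc: "finite (children d h v)" by (rule finite_children)
      have split: "(\<Sum>c\<in>children d h v. basis_vec c) = basis_vec w + (\<Sum>c\<in>children d h v - {w}. basis_vec c)"
        using sum.remove[OF fc wc] .
      have rest: "(\<Sum>c\<in>children d h v - {w}. basis_vec c) \<in> ?M"
      proof (rule M_sum)
        show "finite (children d h v - {w})" using fc by simp
      next
        fix c assume "c \<in> children d h v - {w}"
        then have "c \<in> children d h v" "c \<noteq> m v" using True by auto
        then show "basis_vec c \<in> ?M" using M_basis[OF fin_F F_mem[where m=m, OF _ _ vV lv]] by blast
      qed
      have row: "tree_Delta d h v \<in> ?M" using M_row[OF vV] .
      have eq: "tree_Delta d h v = (\<lambda>j. int d * basis_vec v j) - P - (basis_vec w + (\<Sum>c\<in>children d h v - {w}. basis_vec c))"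
        using row_eq[OF vV] unfolding split P_def .
      have "basis_vec w = (\<lambda>j. int d * basis_vec v j) - P - (\<Sum>c\<in>children d h v - {w}. basis_vec c) - tree_Delta d h v"
        unfolding eq by (simp add: algebra_simps)
      also have "\<dots> \<in> ?M" by (intro M_diff M_smul ev PM rest row)
      finally show ?thesis .
    qed
  qed
qed

theorem lemma6p4:
  fixes d h :: nat and m :: "nat list \<Rightarrow> nat list"
  assumes "d \<ge> 3" and "h \<ge> 1"
    and "\<And>i. i \<in> tree_V d h \<Longrightarrow> length i < h \<Longrightarrow> m i \<in> children d h i"
  shows "generates_G d h (Fset d h m)"
proof -
  let ?M = "Mset d h (Fset d h m)"
  have all: "basis_vec u \<in> ?M" if u: "u \<in> tree_V d h" for u
  proof (cases "even (h - length u)")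
    case True
    then show ?thesis using partB[OF assms(1,3) u] by blast
  next
    case False
    have "length u \<le> h" using u by (simp add: tree_V_def)
    then have "length u < h" using False by (cases "length u = h") auto
    then show ?thesis using partA[OF assms(1,3) u _ False] by blast
  qed
  have "v \<in> ?M" if v: "v \<in> ZV d h" for v
  proof -
    have "v = (\<Sum>u\<in>tree_V d h. (\<lambda>j. v u * basis_vec u j))"
    proof (rule ext)
      fix j
      have "(\<Sum>u\<in>tree_V d h. (\<lambda>j. v u * basis_vec u j)) j = (\<Sum>u\<in>tree_V d h. v u * basis_vec u j)"
        by (rule sum_fun_app)
      also have "\<dots> = (\<Sum>u\<in>tree_V d h. if u = j then v u else 0)"
        by (rule sum.cong) (auto simp: basis_vec_def)
      also have "\<dots> = (if j \<in> tree_V d h then v j else 0)"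
        using finite_tree_V by (simp add: sum.delta')
      also have "\<dots> = v j" using v by (auto simp: ZV_def)
      finally show "v j = (\<Sum>u\<in>tree_V d h. (\<lambda>j. v u * basis_vec u j)) j" by simp
    qed
    also have "\<dots> \<in> ?M"
      by (intro M_sum finite_tree_V M_smul all)
    finally show ?thesis .
  qed
  then show ?thesis unfolding generates_G_def Mset_def by blast
qed

end
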